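(* Let $\mathcal{D}$ be a $\{K_3,K_4\}$-decomposition of $K_{18}$ with $\alpha=13$, let $W$ be the set of vertices $x$ with $\alpha_x\ge 2$, and for $i\in\{0,1,2,3\}$ let $t_i$ be the number of copies of $K_3$ in $\mathcal{D}$ having exactly $i$ vertices in $W$. Then $(t_0,t_1,t_2,t_3)\neq(0,0,11,2)$.
   Context: A $\{K_3,K_4\}$-decomposition of $K_v$ is a collection of subgraphs, each isomorphic to $K_3$ or $K_4$, such that every edge of $K_v$ lies in exactly one of them. $\alpha$ is the number of copies of $K_3$ in the decomposition, and for a vertex $x$, $\alpha_x$ is the number of copies of $K_3$ in the decomposition containing $x$. *)

theory Defs
  imports Main
begin

text \<open>A copy of K3 or K4 inside the complete graph K_v on vertex set V is determined
by its vertex set (it uses all edges among those vertices), so a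
{K3,K4}-decomposition of K_v is a set D of 3- or 4-subsets of V such that every
pair of distinct vertices lies in exactly one member of D.\<close>

definition K34_decomposition :: "'a set \<Rightarrow> 'a set set \<Rightarrow> bool" where
  "K34_decomposition V D \<longleftrightarrow>
     (\<forall>B\<in>D. B \<subseteq> V \<and> (card B = 3 \<or> card B = 4)) \<and>
     (\<forall>x\<in>V. \<forall>y\<in>V. x \<noteq> y \<longrightarrow> (\<exists>!B. B \<in> D \<and> x \<in> B \<and> y \<in> B))"

definition alpha :: "'a set set \<Rightarrow> nat" where
  "alpha D = card {B\<in>D. card B = 3}"

definition alpha_at :: "'a set set \<Rightarrow> 'a \<Rightarrow> nat" where
  "alpha_at D x = card {B\<in>D. card B = 3 \<and> x \<in> B}"

definition Wset :: "'a set \<Rightarrow> 'a set set \<Rightarrow> 'a set" where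
  "Wset V D = {x\<in>V. alpha_at D x \<ge> 2}"

definition tcount :: "'a set \<Rightarrow> 'a set set \<Rightarrow> nat \<Rightarrow> nat" where
  "tcount V D i = card {B\<in>D. card B = 3 \<and> card (B \<inter> Wset V D) = i}"

end

theory Submission
  imports Defs
begin


lemma card2_pick: "card A = 2 \<Longrightarrow> u \<in> A \<Longrightarrow> \<exists>v. v \<noteq> u \<and> A = {u, v}"
  by (metis card_2_iff insertE insert_commute singletonD)

lemma card2_eq: assumes "finite A" "card A = 2" "a \<in> A" "b \<in> A" "a \<noteq> b" shows "A = {a, b}"
proof -
  have s: "{a, b} \<subseteq> A" and c: "card {a, b} = 2" using assms by auto
  have "{a, b} = A" using card_subset_eq[OF assms(1) s] c assms(2) by simp
  thus ?thesis by simp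
qed

locale dec18 =
  fixes V :: "'a set" and D :: "'a set set"
  assumes finV: "finite V" and cardV: "card V = 18"
    and dec: "K34_decomposition V D" and al13: "alpha D = 13"
    and tc0: "tcount V D 0 = 0" and tc1: "tcount V D 1 = 0"
    and tc2: "tcount V D 2 = 11" and tc3: "tcount V D 3 = 2"
begin

definition "T = {B\<in>D. card B = 3}"
definition "Q = {B\<in>D. card B = 4}"
definition "W = Wset V D"
definition "N = V - W"
definition "Dx x = {B\<in>D. x \<in> B}"
definition "Tx x = {B\<in>T. x \<in> B}"
definition "Qx x = {B\<in>Q. x \<in> B}"

lemma blk: "B \<in> D \<Longrightarrow> B \<subseteq> V \<and> (card B = 3 \<or> card B = 4)"
  using dec unfolding K34_decomposition_def by blast

lemma finD: "finite D"
proof -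
  have "D \<subseteq> Pow V" using blk by blast
  thus ?thesis by (rule finite_subset) (simp add: finV)
qed

lemma finB: assumes "B \<in> D" shows "finite B"
proof -
  have "B \<subseteq> V" using blk[OF assms] by simp
  thus ?thesis using finV by (rule finite_subset)
qed

lemma uniq: "B \<in> D \<Longrightarrow> B' \<in> D \<Longrightarrow> x \<in> B \<Longrightarrow> y \<in> B \<Longrightarrow> x \<in> B' \<Longrightarrow> y \<in> B' \<Longrightarrow> x \<noteq> y \<Longrightarrow> B = B'"
proof -
  assume a: "B \<in> D" "B' \<in> D" "x \<in> B" "y \<in> B" "x \<in> B'" "y \<in> B'" "x \<noteq> y"
  then have "x \<in> V" "y \<in> V" using blk by auto
  then have "\<exists>!B. B \<in> D \<and> x \<in> B \<and> y \<in> B" using dec a(7) unfolding K34_decomposition_def by blast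
  then obtain B0 where "\<forall>C. (C \<in> D \<and> x \<in> C \<and> y \<in> C) \<longrightarrow> C = B0" by blast
  hence "B = B0" "B' = B0" using a by blast+
  thus ?thesis by simp
qed

lemma exb: "x \<in> V \<Longrightarrow> y \<in> V \<Longrightarrow> x \<noteq> y \<Longrightarrow> \<exists>B\<in>D. x \<in> B \<and> y \<in> B"
  using dec unfolding K34_decomposition_def by blast

lemma local_count:
  assumes x: "x \<in> V" and S: "S \<subseteq> V"
  shows "card (S - {x}) = (\<Sum>B\<in>Dx x. card ((B - {x}) \<inter> S))"
proof -
  have eq: "S - {x} = (\<Union>B\<in>Dx x. (B - {x}) \<inter> S)"
  proof
    show "S - {x} \<subseteq> (\<Union>B\<in>Dx x. (B - {x}) \<inter> S)"
    proof
      fix y assume y: "y \<in> S - {x}"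
      then obtain B where "B \<in> D" "x \<in> B" "y \<in> B" using exb[of x y] x S by auto
      thus "y \<in> (\<Union>B\<in>Dx x. (B - {x}) \<inter> S)" using y unfolding Dx_def by auto
    qed
  qed (auto simp: Dx_def)
  have "card (\<Union>B\<in>Dx x. (B - {x}) \<inter> S) = (\<Sum>B\<in>Dx x. card ((B - {x}) \<inter> S))"
  proof (rule card_UN_disjoint)
    show "finite (Dx x)" using finD unfolding Dx_def by auto
    show "\<forall>B\<in>Dx x. finite ((B - {x}) \<inter> S)" using finB unfolding Dx_def by auto
    show "\<forall>B\<in>Dx x. \<forall>B'\<in>Dx x. B \<noteq> B' \<longrightarrow> (B - {x}) \<inter> S \<inter> ((B' - {x}) \<inter> S) = {}"
    proof (intro ballI impI)
      fix B B' assume "B \<in> Dx x" "B' \<in> Dx x" "B \<noteq> B'"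
      thus "(B - {x}) \<inter> S \<inter> ((B' - {x}) \<inter> S) = {}" unfolding Dx_def using uniq[of B B' x] by auto
    qed
  qed
  thus ?thesis unfolding eq .
qed

lemma double_count:
  fixes f :: "'a set \<Rightarrow> 'b::comm_semiring_1"
  assumes S: "finite S" and P: "P \<subseteq> D"
  shows "(\<Sum>x\<in>S. \<Sum>B\<in>{B\<in>P. x \<in> B}. f B) = (\<Sum>B\<in>P. of_nat (card (B \<inter> S)) * f B)"
proof -
  have fP: "finite P" using finD P rev_finite_subset by blast
  have "(\<Sum>x\<in>S. \<Sum>B\<in>{B\<in>P. x \<in> B}. f B) = (\<Sum>x\<in>S. \<Sum>B\<in>P. if x \<in> B then f B else 0)"
    by (simp add: sum.inter_filter fP)
  also have "\<dots> = (\<Sum>B\<in>P. \<Sum>x\<in>S. if x \<in> B then f B else 0)" by (rule sum.swap)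
  also have "\<dots> = (\<Sum>B\<in>P. \<Sum>x\<in>{x\<in>S. x \<in> B}. f B)"
    by (rule sum.cong[OF refl], rule sum.inter_filter[OF S, symmetric])
  also have "\<dots> = (\<Sum>B\<in>P. of_nat (card (B \<inter> S)) * f B)"
  proof (rule sum.cong[OF refl])
    fix B assume "B \<in> P"
    have "{x\<in>S. x \<in> B} = B \<inter> S" by blast
    thus "(\<Sum>x\<in>{x\<in>S. x \<in> B}. f B) = of_nat (card (B \<inter> S)) * f B" by (simp only: sum_constant)
  qed
  finally show ?thesis .
qed

lemma TD: "T \<subseteq> D" and QD: "Q \<subseteq> D" unfolding T_def Q_def by auto
lemma finT: "finite T" and finQ: "finite Q" using finD TD QD rev_finite_subset by blast+
lemma finDx: "finite (Dx x)" and finTx: "finite (Tx x)" and finQx: "finite (Qx x)"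
  using finD finT finQ unfolding Dx_def Tx_def Qx_def by auto

lemma cardT: "B \<in> T \<Longrightarrow> card B = 3" and cardQ: "B \<in> Q \<Longrightarrow> card B = 4"
  unfolding T_def Q_def by auto
lemma TQ_D: "B \<in> D \<Longrightarrow> B \<in> T \<or> B \<in> Q" using blk unfolding T_def Q_def by auto
lemma TsubV: "B \<in> T \<Longrightarrow> B \<subseteq> V" and QsubV: "B \<in> Q \<Longrightarrow> B \<subseteq> V"
  using blk TD QD by auto

lemma sum_split:
  "(\<Sum>B\<in>Dx x. g B) = (\<Sum>B\<in>Tx x. g B) + (\<Sum>B\<in>Qx x. g B)"
proof -
  have "Dx x = Tx x \<union> Qx x" unfolding Dx_def Tx_def Qx_def T_def Q_def using blk by auto
  moreover have "Tx x \<inter> Qx x = {}" unfolding Tx_def Qx_def T_def Q_def by auto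
  ultimately show ?thesis using finTx finQx by (simp add: sum.union_disjoint)
qed

lemma alpha_at_Tx: "alpha_at D x = card (Tx x)"
  unfolding alpha_at_def Tx_def T_def by (rule arg_cong[where f=card]) auto

lemma card_T: "card T = 13" using al13 unfolding alpha_def T_def .

lemma deg:
  assumes x: "x \<in> V" shows "2 * card (Tx x) + 3 * card (Qx x) = 17"
proof -
  have "card (V - {x}) = 17" using x cardV finV by simp
  also have "card (V - {x}) = (\<Sum>B\<in>Dx x. card ((B - {x}) \<inter> V))" using local_count[OF x] by simp
  also have "\<dots> = (\<Sum>B\<in>Tx x. card ((B - {x}) \<inter> V)) + (\<Sum>B\<in>Qx x. card ((B - {x}) \<inter> V))"
    by (rule sum_split)
  also have "(\<Sum>B\<in>Tx x. card ((B - {x}) \<inter> V)) = (\<Sum>B\<in>Tx x. 2)"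
  proof (rule sum.cong[OF refl])
    fix B assume B: "B \<in> Tx x"
    hence "(B - {x}) \<inter> V = B - {x}" "x \<in> B" "card B = 3" "finite B"
      using TsubV cardT finB TD unfolding Tx_def by auto
    thus "card ((B - {x}) \<inter> V) = 2" by simp
  qed
  also have "(\<Sum>B\<in>Qx x. card ((B - {x}) \<inter> V)) = (\<Sum>B\<in>Qx x. 3)"
  proof (rule sum.cong[OF refl])
    fix B assume B: "B \<in> Qx x"
    hence "(B - {x}) \<inter> V = B - {x}" "x \<in> B" "card B = 4" "finite B"
      using QsubV cardQ finB QD unfolding Qx_def by auto
    thus "card ((B - {x}) \<inter> V) = 3" by simp
  qed
  finally show ?thesis by simp
qed

lemma W_alt: "W = {x\<in>V. card (Tx x) \<ge> 2}"
  unfolding W_def Wset_def alpha_at_Tx ..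

lemma WV: "W \<subseteq> V" and NV: "N \<subseteq> V" unfolding W_alt N_def by auto
lemma finW: "finite W" and finN: "finite N" using finV WV NV rev_finite_subset by blast+

lemma tcount_alt: "tcount V D i = card {B\<in>T. card (B \<inter> W) = i}"
  unfolding tcount_def T_def W_def by (simp add: conj_assoc)

definition "A2 = {B\<in>T. card (B \<inter> W) = 2}"
definition "A3 = {B\<in>T. card (B \<inter> W) = 3}"

lemma A23: "T = A2 \<union> A3" "A2 \<inter> A3 = {}" "card A2 = 11" "card A3 = 2"
proof -
  show c2: "card A2 = 11" using tc2 tcount_alt A2_def by simp
  show c3: "card A3 = 2" using tc3 tcount_alt A3_def by simp
  show d: "A2 \<inter> A3 = {}" unfolding A2_def A3_def by auto
  have s: "A2 \<union> A3 \<subseteq> T" unfolding A2_def A3_def by auto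
  have f: "finite A2" "finite A3" using finT s rev_finite_subset by blast+
  have "card (A2 \<union> A3) = card A2 + card A3" using card_Un_disjoint[OF f d] .
  hence "card (A2 \<union> A3) = 13" using c2 c3 by simp
  thus "T = A2 \<union> A3" using card_subset_eq[OF finT s] card_T by simp
qed

lemma triW: "B \<in> T \<Longrightarrow> card (B \<inter> W) = 2 \<or> card (B \<inter> W) = 3"
  using A23(1) unfolding A2_def A3_def by auto

lemma sum_T_card:
  fixes S assumes S: "finite S"
  shows "(\<Sum>x\<in>S. card {B\<in>T. x \<in> B}) = (\<Sum>B\<in>T. card (B \<inter> S))"
  using double_count[OF S TD, of "\<lambda>_. 1::nat"] by simp

lemma sumW: "(\<Sum>x\<in>W. card (Tx x)) = 28"
proof -
  have "(\<Sum>x\<in>W. card (Tx x)) = (\<Sum>B\<in>T. card (B \<inter> W))"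
    using sum_T_card[OF finW] unfolding Tx_def .
  also have "\<dots> = (\<Sum>B\<in>A2. card (B \<inter> W)) + (\<Sum>B\<in>A3. card (B \<inter> W))"
    using A23 finT by (simp add: sum.union_disjoint)
  also have "(\<Sum>B\<in>A2. card (B \<inter> W)) = (\<Sum>B\<in>A2. 2)" by (rule sum.cong) (auto simp: A2_def)
  also have "(\<Sum>B\<in>A3. card (B \<inter> W)) = (\<Sum>B\<in>A3. 3)" by (rule sum.cong) (auto simp: A3_def)
  finally show ?thesis using A23 by simp
qed

lemma sumV: "(\<Sum>x\<in>V. card (Tx x)) = 39"
proof -
  have "(\<Sum>x\<in>V. card (Tx x)) = (\<Sum>B\<in>T. card (B \<inter> V))"
    using sum_T_card[OF finV] unfolding Tx_def .
  also have "\<dots> = (\<Sum>B\<in>T. 3)"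
  proof (rule sum.cong[OF refl])
    fix B assume "B \<in> T" thus "card (B \<inter> V) = 3" using TsubV cardT by (simp add: Int_absorb2)
  qed
  finally show ?thesis using card_T by simp
qed

lemma sumN: "(\<Sum>x\<in>N. card (Tx x)) = 11"
proof -
  have e: "V = W \<union> N" and d: "W \<inter> N = {}" using WV unfolding N_def by auto
  have "(\<Sum>x\<in>W \<union> N. card (Tx x)) = (\<Sum>x\<in>W. card (Tx x)) + (\<Sum>x\<in>N. card (Tx x))"
    by (rule sum.union_disjoint[OF finW finN d])
  hence "(\<Sum>x\<in>V. card (Tx x)) = (\<Sum>x\<in>W. card (Tx x)) + (\<Sum>x\<in>N. card (Tx x))"
    using e by simp
  thus ?thesis using sumV sumW by simp
qed

lemma N_tri: assumes x: "x \<in> N" shows "card (Tx x) = 1" "card (Qx x) = 5"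
proof -
  have "x \<in> V" "x \<notin> W" using x unfolding N_def by auto
  hence "card (Tx x) < 2" "2 * card (Tx x) + 3 * card (Qx x) = 17" using W_alt deg by auto
  thus "card (Tx x) = 1" "card (Qx x) = 5" by presburger+
qed

lemma cardN: "card N = 11" and cardW: "card W = 7"
proof -
  have "(\<Sum>x\<in>N. card (Tx x)) = (\<Sum>x\<in>N. 1)" using N_tri by simp
  thus c: "card N = 11" using sumN by simp
  have "card N = card V - card W" unfolding N_def using card_Diff_subset[OF finW WV] .
  moreover have "card W \<le> card V" using card_mono[OF finV WV] .
  ultimately show "card W = 7" using c cardV by simp
qed

lemma W_tri: assumes x: "x \<in> W" shows "card (Tx x) = 4" "card (Qx x) = 3"
proof -
  have ge: "card (Tx y) \<ge> 4" if "y \<in> W" for y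
  proof -
    have "y \<in> V" "card (Tx y) \<ge> 2" using that W_alt by auto
    moreover have "2 * card (Tx y) + 3 * card (Qx y) = 17" using deg calculation(1) by simp
    ultimately show ?thesis by presburger
  qed
  show "card (Tx x) = 4"
  proof (rule ccontr)
    assume "card (Tx x) \<noteq> 4"
    hence "card (Tx x) \<ge> 5" using ge[OF x] by simp
    have e: "(\<Sum>y\<in>W. card (Tx y)) = card (Tx x) + (\<Sum>y\<in>W - {x}. card (Tx y))"
      using x finW by (simp add: sum.remove)
    have m: "(\<Sum>y\<in>W - {x}. card (Tx y)) \<ge> (\<Sum>y\<in>W - {x}. 4)" using ge by (intro sum_mono) auto
    have "(\<Sum>y\<in>W - {x}. (4::nat)) = 24" using cardW x finW by simp
    hence "(\<Sum>y\<in>W. card (Tx y)) \<ge> 29" using e m \<open>card (Tx x) \<ge> 5\<close> by linarith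
    thus False using sumW by simp
  qed
  thus "card (Qx x) = 3" using deg[of x] x WV by auto
qed

definition "wt K = card (K \<inter> W)"
definition "kk j = card {K\<in>Q. wt K = j}"

lemma split_WN: assumes "B \<subseteq> V" "finite B" shows "card (B \<inter> W) + card (B \<inter> N) = card B"
proof -
  have "B = (B \<inter> W) \<union> (B \<inter> N)" "(B \<inter> W) \<inter> (B \<inter> N) = {}" using assms unfolding N_def by auto
  thus ?thesis using assms card_Un_disjoint[of "B \<inter> W" "B \<inter> N"] by (metis finite_Int)
qed

lemma Q_WN: "K \<in> Q \<Longrightarrow> wt K + card (K \<inter> N) = 4"
  using split_WN[of K] QsubV finB QD cardQ unfolding wt_def by auto
lemma T_WN: "B \<in> T \<Longrightarrow> card (B \<inter> W) + card (B \<inter> N) = 3"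
  using split_WN[of B] TsubV finB TD cardT by auto
lemma T_N1: "B \<in> T \<Longrightarrow> card (B \<inter> N) \<le> 1"
  using T_WN triW by fastforce

lemma N_K4sum: assumes v: "v \<in> N" shows "(\<Sum>K\<in>Qx v. wt K) = 5"
proof -
  have vV: "v \<in> V" and vW: "v \<notin> W" using v unfolding N_def by auto
  have "card (W - {v}) = 7" using vW cardW by simp
  also have "card (W - {v}) = (\<Sum>B\<in>Dx v. card ((B - {v}) \<inter> W))" using local_count[OF vV WV] .
  also have "\<dots> = (\<Sum>B\<in>Tx v. card ((B - {v}) \<inter> W)) + (\<Sum>B\<in>Qx v. card ((B - {v}) \<inter> W))"
    by (rule sum_split)
  also have "(\<Sum>B\<in>Qx v. card ((B - {v}) \<inter> W)) = (\<Sum>K\<in>Qx v. wt K)"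
    by (rule sum.cong[OF refl]) (simp add: wt_def vW Int_Diff Diff_Int_distrib2 insert_absorb Int_insert_right)
  also have "(\<Sum>B\<in>Tx v. card ((B - {v}) \<inter> W)) = 2"
  proof -
    obtain B0 where B0: "Tx v = {B0}" using N_tri(1)[OF v] card_1_singletonE by blast
    hence "B0 \<in> T" "v \<in> B0" unfolding Tx_def by auto
    hence "B0 \<inter> N \<noteq> {}" "finite (B0 \<inter> N)" using v finB TD by auto
    hence "card (B0 \<inter> N) \<ge> 1" by (simp add: Suc_le_eq card_gt_0_iff)
    hence "card (B0 \<inter> W) = 2" using T_WN[OF \<open>B0 \<in> T\<close>] triW[OF \<open>B0 \<in> T\<close>] by linarith
    moreover have "(B0 - {v}) \<inter> W = B0 \<inter> W" using vW by auto
    ultimately show ?thesis using B0 by simp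
  qed
  finally show ?thesis by simp
qed

lemma N_bal: assumes v: "v \<in> N" shows "(\<Sum>K\<in>Qx v. (1 - int (wt K))) = 0"
proof -
  have "(\<Sum>K\<in>Qx v. (1 - int (wt K))) = int (card (Qx v)) - int (\<Sum>K\<in>Qx v. wt K)"
    by (simp add: sum_subtractf)
  thus ?thesis using N_K4sum[OF v] N_tri(2)[OF v] by simp
qed

lemma sumQ_group:
  fixes g :: "nat \<Rightarrow> int"
  shows "(\<Sum>K\<in>Q. g (wt K)) = g 0 * int (kk 0) + g 1 * int (kk 1) + g 2 * int (kk 2) + g 3 * int (kk 3) + g 4 * int (kk 4)"
proof -
  have im: "wt ` Q \<subseteq> {0,1,2,3,4}"
  proof
    fix j assume "j \<in> wt ` Q"
    then obtain K where "K \<in> Q" "j = wt K" by blast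
    hence "j \<le> 4" using Q_WN by fastforce
    thus "j \<in> {0,1,2,3,4}" by auto
  qed
  have "(\<Sum>K\<in>Q. g (wt K)) = (\<Sum>j\<in>{0,1,2,3,4}. \<Sum>K\<in>{K. K \<in> Q \<and> wt K = j}. g (wt K))"
    using sum.group[OF finQ _ im, of "\<lambda>K. g (wt K)"] by simp
  also have "\<dots> = (\<Sum>j\<in>{0,1,2,3,4}. g j * int (kk j))"
  proof (rule sum.cong[OF refl])
    fix j :: nat
    have "(\<Sum>K\<in>{K. K \<in> Q \<and> wt K = j}. g (wt K)) = (\<Sum>K\<in>{K. K \<in> Q \<and> wt K = j}. g j)"
      by (rule sum.cong) auto
    thus "(\<Sum>K\<in>{K. K \<in> Q \<and> wt K = j}. g (wt K)) = g j * int (kk j)" unfolding kk_def by simp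
  qed
  finally show ?thesis by simp
qed

lemma Wpairs: "(\<Sum>K\<in>Q. int (wt K) * (int (wt K) - 1)) = 8"
proof -
  have "(\<Sum>x\<in>W. int (card (W - {x}))) = 42" using cardW finW by simp
  also have "(\<Sum>x\<in>W. int (card (W - {x}))) = (\<Sum>x\<in>W. \<Sum>B\<in>{B\<in>D. x \<in> B}. int (card (B \<inter> W)) - 1)"
  proof (rule sum.cong[OF refl])
    fix x assume x: "x \<in> W"
    have "card (W - {x}) = (\<Sum>B\<in>Dx x. card ((B - {x}) \<inter> W))" using local_count x WV by blast
    also have "\<dots> = (\<Sum>B\<in>Dx x. card (B \<inter> W) - 1)"
    proof (rule sum.cong[OF refl])
      fix B assume B: "B \<in> Dx x"
      have "(B - {x}) \<inter> W = (B \<inter> W) - {x}" by auto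
      moreover have "x \<in> B \<inter> W" "finite (B \<inter> W)" using B x finB unfolding Dx_def by auto
      ultimately show "card ((B - {x}) \<inter> W) = card (B \<inter> W) - 1" by simp
    qed
    finally have "int (card (W - {x})) = (\<Sum>B\<in>Dx x. int (card (B \<inter> W) - 1))" by simp
    also have "\<dots> = (\<Sum>B\<in>Dx x. int (card (B \<inter> W)) - 1)"
    proof (rule sum.cong[OF refl])
      fix B assume "B \<in> Dx x"
      hence "B \<inter> W \<noteq> {}" "finite (B \<inter> W)" using x finB unfolding Dx_def by auto
      hence "card (B \<inter> W) \<ge> 1" by (simp add: Suc_le_eq card_gt_0_iff)
      thus "int (card (B \<inter> W) - 1) = int (card (B \<inter> W)) - 1" by simp
    qed
    finally show "int (card (W - {x})) = (\<Sum>B\<in>{B\<in>D. x \<in> B}. int (card (B \<inter> W)) - 1)"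
      unfolding Dx_def .
  qed
  also have "\<dots> = (\<Sum>B\<in>D. int (card (B \<inter> W)) * (int (card (B \<inter> W)) - 1))"
    using double_count[OF finW subset_refl, of "\<lambda>B. int (card (B \<inter> W)) - 1"] by simp
  also have "\<dots> = (\<Sum>B\<in>T. int (card (B \<inter> W)) * (int (card (B \<inter> W)) - 1))
                 + (\<Sum>B\<in>Q. int (card (B \<inter> W)) * (int (card (B \<inter> W)) - 1))"
  proof -
    have e: "D = T \<union> Q" and d: "T \<inter> Q = {}" using TQ_D TD QD unfolding T_def Q_def by auto
    show ?thesis by (subst e) (rule sum.union_disjoint[OF finT finQ d])
  qed
  also have "(\<Sum>B\<in>T. int (card (B \<inter> W)) * (int (card (B \<inter> W)) - 1)) = 34"
  proof -
    have "(\<Sum>B\<in>T. int (card (B \<inter> W)) * (int (card (B \<inter> W)) - 1))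
        = (\<Sum>B\<in>A2. int (card (B \<inter> W)) * (int (card (B \<inter> W)) - 1))
        + (\<Sum>B\<in>A3. int (card (B \<inter> W)) * (int (card (B \<inter> W)) - 1))"
      using A23 finT by (simp add: sum.union_disjoint)
    also have "(\<Sum>B\<in>A2. int (card (B \<inter> W)) * (int (card (B \<inter> W)) - 1)) = (\<Sum>B\<in>A2. 2)"
      by (rule sum.cong) (auto simp: A2_def)
    also have "(\<Sum>B\<in>A3. int (card (B \<inter> W)) * (int (card (B \<inter> W)) - 1)) = (\<Sum>B\<in>A3. 6)"
      by (rule sum.cong) (auto simp: A3_def)
    finally show ?thesis using A23 by simp
  qed
  finally show ?thesis unfolding wt_def by simp
qed

lemma Nbal_total: "(\<Sum>K\<in>Q. (4 - int (wt K)) * (1 - int (wt K))) = 0"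
proof -
  have "0 = (\<Sum>v\<in>N. \<Sum>K\<in>{K\<in>Q. v \<in> K}. (1 - int (wt K)))"
    using N_bal unfolding Qx_def by simp
  also have "\<dots> = (\<Sum>K\<in>Q. int (card (K \<inter> N)) * (1 - int (wt K)))"
    using double_count[OF finN QD, of "\<lambda>K. 1 - int (wt K)"] by simp
  also have "\<dots> = (\<Sum>K\<in>Q. (4 - int (wt K)) * (1 - int (wt K)))"
  proof (rule sum.cong[OF refl])
    fix K assume "K \<in> Q"
    hence "int (card (K \<inter> N)) = 4 - int (wt K)" using Q_WN by fastforce
    thus "int (card (K \<inter> N)) * (1 - int (wt K)) = (4 - int (wt K)) * (1 - int (wt K))" by simp
  qed
  finally show ?thesis by simp
qed

lemma kk_cases: "kk 4 = 0 \<and> ((kk 2 = 4 \<and> kk 3 = 0 \<and> kk 0 = 2) \<or> (kk 2 = 1 \<and> kk 3 = 1 \<and> kk 0 = 1))"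
proof -
  have e1: "2 * int (kk 2) + 6 * int (kk 3) + 12 * int (kk 4) = 8"
    using Wpairs sumQ_group[of "\<lambda>j. int j * (int j - 1)"] by simp
  have e2: "4 * int (kk 0) - 2 * int (kk 2) - 2 * int (kk 3) = 0"
    using Nbal_total sumQ_group[of "\<lambda>j. (4 - int j) * (1 - int j)"] by simp
  have n1: "2 * kk 2 + 6 * kk 3 + 12 * kk 4 = 8" using e1 by linarith
  have n2: "4 * kk 0 = 2 * kk 2 + 2 * kk 3" using e2 by linarith
  have "kk 4 = 0" using n1 by linarith
  moreover have "kk 3 \<le> 1" using n1 by linarith
  ultimately show ?thesis
  proof (cases "kk 3 = 0")
    case True
    hence "kk 2 = 4" "kk 0 = 2" using n1 n2 \<open>kk 4 = 0\<close> by linarith+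
    thus ?thesis using True \<open>kk 4 = 0\<close> by simp
  next
    case False
    hence "kk 3 = 1" using \<open>kk 3 \<le> 1\<close> by simp
    hence "kk 2 = 1" "kk 0 = 1" using n1 n2 \<open>kk 4 = 0\<close> by linarith+
    thus ?thesis using \<open>kk 3 = 1\<close> \<open>kk 4 = 0\<close> by simp
  qed
qed

lemma inter_le1: assumes "B \<in> D" "B' \<in> D" "B \<noteq> B'" shows "card (B \<inter> B') \<le> 1"
proof -
  have f: "finite (B \<inter> B')" using finB assms by auto
  have "\<forall>a1\<in>B \<inter> B'. \<forall>a2\<in>B \<inter> B'. a1 = a2" using uniq assms by blast
  thus ?thesis using card_le_Suc0_iff_eq[OF f] by simp
qed

lemma two_in_same: "B \<in> D \<Longrightarrow> B' \<in> D \<Longrightarrow> u \<in> B \<Longrightarrow> v \<in> B \<Longrightarrow> u \<in> B' \<Longrightarrow> v \<in> B' \<Longrightarrow> B \<noteq> B' \<Longrightarrow> u = v"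
  using uniq by blast

lemma wt_le3: "K \<in> Q \<Longrightarrow> wt K \<le> 3"
proof (rule ccontr)
  assume K: "K \<in> Q" "\<not> wt K \<le> 3"
  hence "wt K = 4" using Q_WN[OF K(1)] by simp
  hence "K \<in> {K\<in>Q. wt K = 4}" using K by simp
  moreover have "finite {K\<in>Q. wt K = 4}" using finQ by simp
  ultimately have "kk 4 \<noteq> 0" unfolding kk_def by (metis card_0_eq empty_iff)
  thus False using kk_cases by simp
qed

lemma card_ge1: "finite A \<Longrightarrow> a \<in> A \<Longrightarrow> card A \<ge> 1"
  by (metis One_nat_def Suc_leI card_gt_0_iff empty_iff)

lemma c0_exists:
  assumes v: "v \<in> N" and K: "K \<in> Qx v" and w2: "wt K \<ge> 2"
  shows "\<exists>K'\<in>Qx v. wt K' = 0"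
proof (rule ccontr)
  assume "\<not> ?thesis"
  hence pos: "\<forall>K'\<in>Qx v. wt K' \<ge> 1" by (metis less_one not_le)
  have "(\<Sum>K'\<in>Qx v. (1 - int (wt K'))) = (1 - int (wt K)) + (\<Sum>K'\<in>Qx v - {K}. (1 - int (wt K')))"
    using K finQx by (simp add: sum.remove)
  also have "(\<Sum>K'\<in>Qx v - {K}. (1 - int (wt K'))) \<le> (\<Sum>K'\<in>Qx v - {K}. 0)"
    using pos by (intro sum_mono) auto
  finally have "(\<Sum>K'\<in>Qx v. (1 - int (wt K'))) < 0" using w2 by simp
  thus False using N_bal[OF v] by simp
qed

lemma wt0_subN: assumes "K \<in> Q" "wt K = 0" shows "K \<subseteq> N"
proof -
  have "finite (K \<inter> W)" using finB QD assms by auto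
  hence "K \<inter> W = {}" using assms unfolding wt_def by simp
  thus ?thesis using QsubV[OF assms(1)] unfolding N_def by auto
qed

lemma NinN: "v \<in> N \<Longrightarrow> v \<notin> W" "v \<in> N \<Longrightarrow> v \<in> V" unfolding N_def by auto

lemma card2_in: "K \<in> Q \<Longrightarrow> u \<in> K \<Longrightarrow> u \<in> N \<Longrightarrow> wt K = 2 \<Longrightarrow> \<exists>v. v \<noteq> u \<and> K \<inter> N = {u, v}"
proof -
  assume a: "K \<in> Q" "u \<in> K" "u \<in> N" "wt K = 2"
  hence "card (K \<inter> N) = 2" using Q_WN by fastforce
  then obtain p q where pq: "K \<inter> N = {p, q}" "p \<noteq> q" by (meson card_2_iff)
  thus ?thesis using a by (metis Int_iff insertE insert_commute singletonD)
qed

lemma caseB_false: assumes "kk 3 = 1" "kk 2 = 1" "kk 0 = 1" shows False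
proof -
  have "card {K\<in>Q. wt K = 2} = 1" using assms kk_def by simp
  then obtain K where K: "{K\<in>Q. wt K = 2} = {K}" using card_1_singletonE by blast
  hence KQ: "K \<in> Q" "wt K = 2" by auto
  hence "card (K \<inter> N) = 2" using Q_WN by fastforce
  then obtain u v where uv: "K \<inter> N = {u, v}" "u \<noteq> v" by (meson card_2_iff)
  have "card {K\<in>Q. wt K = 0} = 1" using assms kk_def by simp
  then obtain Z where Z: "{K\<in>Q. wt K = 0} = {Z}" using card_1_singletonE by blast
  have inZ: "x \<in> Z" if "x \<in> K \<inter> N" for x
  proof -
    have "x \<in> N" "K \<in> Qx x" using that KQ unfolding Qx_def by auto
    then obtain K' where "K' \<in> Qx x" "wt K' = 0" using c0_exists KQ by fastforce
    hence "K' \<in> {K\<in>Q. wt K = 0}" unfolding Qx_def by auto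
    hence "K' = Z" using Z by auto
    thus "x \<in> Z" using \<open>K' \<in> Qx x\<close> unfolding Qx_def by auto
  qed
  have "u \<in> Z" "v \<in> Z" using inZ uv by auto
  moreover have "Z \<in> Q" "wt Z = 0" using Z by auto
  moreover have "u \<in> K" "v \<in> K" using uv by auto
  ultimately have "K = Z" using uniq[of K Z u v] KQ QD uv by auto
  thus False using KQ \<open>wt Z = 0\<close> by simp
qed

lemma Wcount: assumes w: "w \<in> W" shows "(\<Sum>K\<in>Qx w. card (K \<inter> N)) \<ge> 7"
proof -
  have wV: "w \<in> V" "w \<notin> N" using w WV unfolding N_def by auto
  have "card (N - {w}) = 11" using wV cardN by simp
  also have "card (N - {w}) = (\<Sum>B\<in>Dx w. card ((B - {w}) \<inter> N))" using local_count[OF wV(1) NV] .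
  also have "\<dots> = (\<Sum>B\<in>Tx w. card ((B - {w}) \<inter> N)) + (\<Sum>B\<in>Qx w. card ((B - {w}) \<inter> N))"
    by (rule sum_split)
  also have "(\<Sum>B\<in>Qx w. card ((B - {w}) \<inter> N)) = (\<Sum>K\<in>Qx w. card (K \<inter> N))"
  proof (rule sum.cong[OF refl])
    fix B have "(B - {w}) \<inter> N = B \<inter> N" using wV by auto
    thus "card ((B - {w}) \<inter> N) = card (B \<inter> N)" by simp
  qed
  finally have e: "(\<Sum>B\<in>Tx w. card ((B - {w}) \<inter> N)) + (\<Sum>K\<in>Qx w. card (K \<inter> N)) = 11" .
  have "(\<Sum>B\<in>Tx w. card ((B - {w}) \<inter> N)) \<le> (\<Sum>B\<in>Tx w. 1)"
  proof (rule sum_mono)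
    fix B assume "B \<in> Tx w"
    hence "card (B \<inter> N) \<le> 1" "finite (B \<inter> N)" using T_N1 finB TD unfolding Tx_def by auto
    moreover have "(B - {w}) \<inter> N = B \<inter> N" using wV by auto
    ultimately show "card ((B - {w}) \<inter> N) \<le> 1" by simp
  qed
  also have "(\<Sum>B\<in>Tx w. (1::nat)) = 4" using W_tri(1)[OF w] by simp
  finally show ?thesis using e by linarith
qed

lemma N_tri_N: assumes "u \<in> N" "B \<in> T" "u \<in> B" shows "B \<inter> N = {u}"
proof -
  have "card (B \<inter> N) \<le> 1" "finite (B \<inter> N)" using T_N1 assms finB TD by auto
  moreover have "u \<in> B \<inter> N" using assms by auto
  ultimately have "\<forall>v\<in>B \<inter> N. v = u" using card_le_Suc0_iff_eq by (metis One_nat_def)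
  thus ?thesis using \<open>u \<in> B \<inter> N\<close> by blast
qed

lemma uniqT: assumes "u \<in> N" "B \<in> T" "u \<in> B" "B' \<in> T" "u \<in> B'" shows "B = B'"
proof -
  have "card (Tx u) = 1" using N_tri assms by auto
  moreover have "B \<in> Tx u" "B' \<in> Tx u" using assms unfolding Tx_def by auto
  ultimately show ?thesis by (metis card_1_singletonE singletonD)
qed

lemma TQ_disj: "B \<in> T \<Longrightarrow> B \<in> Q \<Longrightarrow> False"
  unfolding T_def Q_def by auto

end

locale caseA = dec18 +
  fixes Z1 Z2
  assumes k2: "kk 2 = 4" and k3: "kk 3 = 0"
    and Zs: "{K\<in>Q. wt K = 0} = {Z1, Z2}" and Z12: "Z1 \<noteq> Z2"
begin

lemma wt_le2: "K \<in> Q \<Longrightarrow> wt K \<le> 2"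
proof (rule ccontr)
  assume K: "K \<in> Q" "\<not> wt K \<le> 2"
  hence "wt K = 3" using wt_le3 by fastforce
  hence "K \<in> {K\<in>Q. wt K = 3}" using K by simp
  moreover have "finite {K\<in>Q. wt K = 3}" using finQ by simp
  ultimately have "kk 3 \<noteq> 0" unfolding kk_def by (metis card_0_eq empty_iff)
  thus False using k3 by simp
qed

lemma Zprops: "Z1 \<in> Q" "Z2 \<in> Q" "wt Z1 = 0" "wt Z2 = 0" "Z1 \<subseteq> N" "Z2 \<subseteq> N"
  "card Z1 = 4" "card Z2 = 4" "Z1 \<in> D" "Z2 \<in> D"
proof -
  have a: "Z1 \<in> {K\<in>Q. wt K = 0}" "Z2 \<in> {K\<in>Q. wt K = 0}" using Zs by auto
  thus "Z1 \<in> Q" "Z2 \<in> Q" "wt Z1 = 0" "wt Z2 = 0" by auto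
  thus "Z1 \<subseteq> N" "Z2 \<subseteq> N" using wt0_subN by auto
  show "card Z1 = 4" "card Z2 = 4" "Z1 \<in> D" "Z2 \<in> D" using a cardQ QD by auto
qed

lemma wt0_iff: "K \<in> Q \<Longrightarrow> wt K = 0 \<longleftrightarrow> K = Z1 \<or> K = Z2"
  using Zs Zprops by blast

definition "c0 v = card {K\<in>Qx v. wt K = 0}"
definition "c2 v = card {K\<in>Qx v. wt K = 2}"

lemma c_eq: assumes v: "v \<in> N" shows "c0 v = c2 v"
proof -
  have fin: "finite (Qx v)" by (rule finQx)
  have "(\<Sum>K\<in>Qx v. (1 - int (wt K))) = (\<Sum>K\<in>Qx v. (if wt K = 0 then 1 else 0) - (if wt K = 2 then 1 else 0))"
  proof (rule sum.cong[OF refl])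
    fix K assume "K \<in> Qx v"
    hence "wt K \<le> 2" using wt_le2 unfolding Qx_def by auto
    thus "1 - int (wt K) = (if wt K = 0 then 1 else 0) - (if wt K = 2 then 1 else 0)"
      by (cases "wt K"; cases "wt K - 1"; simp)
  qed
  also have "\<dots> = (\<Sum>K\<in>Qx v. (if wt K = 0 then 1 else 0)) - (\<Sum>K\<in>Qx v. (if wt K = 2 then 1 else (0::int)))"
    by (simp add: sum_subtractf)
  also have "(\<Sum>K\<in>Qx v. (if wt K = 0 then 1 else (0::int))) = int (c0 v)"
    unfolding c0_def using sum.inter_filter[OF fin, of "\<lambda>_. (1::int)" "\<lambda>K. wt K = 0"] by simp
  also have "(\<Sum>K\<in>Qx v. (if wt K = 2 then 1 else (0::int))) = int (c2 v)"
    unfolding c2_def using sum.inter_filter[OF fin, of "\<lambda>_. (1::int)" "\<lambda>K. wt K = 2"] by simp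
  finally show ?thesis using N_bal[OF v] by simp
qed

lemma c0_val: "c0 v = (if v \<in> Z1 then 1 else 0) + (if v \<in> Z2 then 1 else 0)"
proof -
  have e: "{K\<in>Qx v. wt K = 0} = {K\<in>{Z1, Z2}. v \<in> K}"
  proof (rule set_eqI)
    fix K show "K \<in> {K\<in>Qx v. wt K = 0} \<longleftrightarrow> K \<in> {K\<in>{Z1, Z2}. v \<in> K}"
      using wt0_iff[of K] Zprops unfolding Qx_def by auto
  qed
  show ?thesis
  proof (cases "v \<in> Z1"; cases "v \<in> Z2")
    assume "v \<in> Z1" "v \<in> Z2"
    hence "{K\<in>{Z1, Z2}. v \<in> K} = {Z1, Z2}" by blast
    thus ?thesis unfolding c0_def e using Z12 \<open>v \<in> Z1\<close> \<open>v \<in> Z2\<close> by simp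
  next
    assume "v \<in> Z1" "v \<notin> Z2"
    hence "{K\<in>{Z1, Z2}. v \<in> K} = {Z1}" by blast
    thus ?thesis unfolding c0_def e using \<open>v \<in> Z1\<close> \<open>v \<notin> Z2\<close> by simp
  next
    assume "v \<notin> Z1" "v \<in> Z2"
    hence "{K\<in>{Z1, Z2}. v \<in> K} = {Z2}" by blast
    thus ?thesis unfolding c0_def e using \<open>v \<notin> Z1\<close> \<open>v \<in> Z2\<close> by simp
  next
    assume "v \<notin> Z1" "v \<notin> Z2"
    hence "{K\<in>{Z1, Z2}. v \<in> K} = {}" by blast
    thus ?thesis unfolding c0_def e using \<open>v \<notin> Z1\<close> \<open>v \<notin> Z2\<close> by simp
  qed
qed

lemma F1: "v \<in> N \<Longrightarrow> K \<in> Q \<Longrightarrow> v \<in> K \<Longrightarrow> wt K = 2 \<Longrightarrow> v \<in> Z1 \<or> v \<in> Z2"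
proof -
  assume a: "v \<in> N" "K \<in> Q" "v \<in> K" "wt K = 2"
  then obtain K' where "K' \<in> Qx v" "wt K' = 0" using c0_exists[of v K] unfolding Qx_def by auto
  thus ?thesis using wt0_iff unfolding Qx_def by auto
qed

lemma F2: "Z1 \<inter> Z2 = {}"
proof (rule ccontr)
  assume "Z1 \<inter> Z2 \<noteq> {}"
  then obtain p where p: "p \<in> Z1" "p \<in> Z2" by blast
  hence pN: "p \<in> N" using Zprops by auto
  have "c2 p = 2" using c_eq[OF pN] c0_val[of p] p by simp
  hence "{K\<in>Qx p. wt K = 2} \<noteq> {}" unfolding c2_def by (metis card.empty zero_neq_numeral)
  then obtain K where "K \<in> Qx p" "wt K = 2" by blast
  hence K: "K \<in> Q" "p \<in> K" "wt K = 2" unfolding Qx_def by auto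
  then obtain q where q: "q \<noteq> p" "K \<inter> N = {p, q}" using card2_in pN by blast
  hence "q \<in> N" "q \<in> K" by auto
  hence "q \<in> Z1 \<or> q \<in> Z2" using F1 K by auto
  moreover have "K \<noteq> Z1" "K \<noteq> Z2" using K Zprops by auto
  ultimately show False using uniq[of K Z1 p q] uniq[of K Z2 p q] K p q QD Zprops \<open>q \<in> K\<close> by auto
qed

lemma ZiK: "K \<in> Q \<Longrightarrow> K \<noteq> Z1 \<Longrightarrow> card (K \<inter> Z1) \<le> 1"
  "K \<in> Q \<Longrightarrow> K \<noteq> Z2 \<Longrightarrow> card (K \<inter> Z2) \<le> 1"
  using inter_le1 QD Zprops by auto

lemma F5: assumes K: "K \<in> Q" "wt K = 2" "K \<inter> N = {u, v}" "u \<noteq> v"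
  shows "(u \<in> Z1 \<and> v \<in> Z2) \<or> (u \<in> Z2 \<and> v \<in> Z1)"
proof -
  have "u \<in> N" "v \<in> N" "u \<in> K" "v \<in> K" using K by auto
  hence uz: "u \<in> Z1 \<or> u \<in> Z2" and vz: "v \<in> Z1 \<or> v \<in> Z2" using F1 K by auto
  have "K \<noteq> Z1" "K \<noteq> Z2" using K Zprops by auto
  hence "\<not> (u \<in> Z1 \<and> v \<in> Z1)" "\<not> (u \<in> Z2 \<and> v \<in> Z2)"
    using uniq[of K Z1 u v] uniq[of K Z2 u v] K QD Zprops \<open>u \<in> K\<close> \<open>v \<in> K\<close> by auto
  thus ?thesis using uz vz by blast
qed

lemma F3: assumes v: "v \<in> Z1 \<union> Z2" shows "\<exists>K. K \<in> Q \<and> v \<in> K \<and> wt K = 2"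
  and "K \<in> Q \<Longrightarrow> v \<in> K \<Longrightarrow> wt K = 2 \<Longrightarrow> K' \<in> Q \<Longrightarrow> v \<in> K' \<Longrightarrow> wt K' = 2 \<Longrightarrow> K = K'"
proof -
  have vN: "v \<in> N" using v Zprops by auto
  have "c0 v = 1" using c0_val[of v] v F2 by auto
  hence c: "c2 v = 1" using c_eq[OF vN] by simp
  then obtain K0 where K0: "{K\<in>Qx v. wt K = 2} = {K0}" unfolding c2_def using card_1_singletonE by blast
  thus "\<exists>K. K \<in> Q \<and> v \<in> K \<and> wt K = 2" unfolding Qx_def by auto
  have K0': "L = K0" if "L \<in> Q" "v \<in> L" "wt L = 2" for L
  proof -
    have "L \<in> {K\<in>Qx v. wt K = 2}" using that unfolding Qx_def by simp
    thus ?thesis using K0 by simp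
  qed
  show "K \<in> Q \<Longrightarrow> v \<in> K \<Longrightarrow> wt K = 2 \<Longrightarrow> K' \<in> Q \<Longrightarrow> v \<in> K' \<Longrightarrow> wt K' = 2 \<Longrightarrow> K = K'"
    using K0'[of K] K0'[of K'] by simp
qed

lemma F4: assumes v: "v \<in> N" "v \<notin> Z1" "v \<notin> Z2" and K: "K \<in> Q" "v \<in> K" shows "wt K = 1"
proof -
  have "c0 v = 0" using c0_val[of v] v by simp
  hence "c2 v = 0" using c_eq v by simp
  moreover have "finite {K\<in>Qx v. wt K = 2}" using finQx by simp
  ultimately have "wt K \<noteq> 2" using K unfolding c2_def Qx_def by (metis (mono_tags, lifting) card_0_eq empty_iff mem_Collect_eq)
  moreover have "wt K \<noteq> 0" using wt0_iff K v by auto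
  ultimately show ?thesis using wt_le2[OF K(1)] by simp
qed

lemma KW_ne: "K \<in> Q \<Longrightarrow> w \<in> K \<Longrightarrow> w \<in> W \<Longrightarrow> K \<noteq> Z1 \<and> K \<noteq> Z2"
  using Zprops unfolding N_def by auto

lemma P2s: assumes "K \<in> Q" "wt K = 2" shows "\<exists>a b. K \<inter> N = {a, b} \<and> a \<in> Z1 \<and> b \<in> Z2"
proof -
  have "card (K \<inter> N) = 2" using Q_WN assms by fastforce
  then obtain u v where uv: "K \<inter> N = {u, v}" "u \<noteq> v" by (meson card_2_iff)
  from F5[OF assms uv] show ?thesis
  proof
    assume "u \<in> Z1 \<and> v \<in> Z2" thus ?thesis using uv by blast
  next
    assume "u \<in> Z2 \<and> v \<in> Z1" thus ?thesis using uv by (metis insert_commute)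
  qed
qed

lemma cardR3: "card (N - Z1 - Z2) = 3"
proof -
  have "N - Z1 - Z2 = N - (Z1 \<union> Z2)" by auto
  moreover have "card (Z1 \<union> Z2) = 8" using card_Un_disjoint[of Z1 Z2] F2 Zprops finB by simp
  moreover have "Z1 \<union> Z2 \<subseteq> N" using Zprops by auto
  moreover have "finite (Z1 \<union> Z2)" using Zprops finB by auto
  ultimately show ?thesis using card_Diff_subset[of "Z1 \<union> Z2" N] cardN by simp
qed

end

locale caseA3 = caseA +
  fixes x y z
  assumes R3: "N - Z1 - Z2 = {x, y, z}" and xy: "x \<noteq> y" and yz: "y \<noteq> z" and xz: "x \<noteq> z"
begin

lemma R3_props: "s \<in> {x, y, z} \<Longrightarrow> s \<in> N \<and> s \<notin> Z1 \<and> s \<notin> Z2"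
  using R3 by blast

lemma N_decomp: "N = Z1 \<union> Z2 \<union> {x, y, z}"
  using R3 Zprops by blast

lemma R3_wt: assumes "s \<in> {x, y, z}" "K \<in> Q" "s \<in> K" shows "wt K = 1" "card (K \<inter> N) = 3"
proof -
  show "wt K = 1" using F4 R3_props[OF assms(1)] assms by blast
  thus "card (K \<inter> N) = 3" using Q_WN assms by fastforce
qed

lemma pairQ: assumes "s \<in> N" "t \<in> N" "s \<noteq> t" shows "\<exists>K\<in>Q. s \<in> K \<and> t \<in> K"
proof -
  obtain B where B: "B \<in> D" "s \<in> B" "t \<in> B" using exb assms NV by blast
  have "B \<notin> T"
  proof
    assume "B \<in> T"
    hence "B \<inter> N = {s}" using N_tri_N assms B by auto
    thus False using assms B by auto
  qed
  thus ?thesis using B TQ_D by auto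
qed

lemma LemII:
  assumes st: "{s, t, t'} = {x, y, z}" "s \<noteq> t" "s \<noteq> t'" "t \<noteq> t'"
    and K: "K \<in> Q" "s \<in> K" "t \<in> K" "t' \<notin> K" and p: "p \<in> K" "p \<in> Z1 \<union> Z2"
    and K': "K' \<in> Q" "s \<in> K'" "t' \<in> K'" "t \<notin> K'" and q: "q \<in> K'" "q \<in> Z1 \<union> Z2"
  shows "(if p \<in> Z1 then 1 else 0) + (if q \<in> Z1 then 1 else 0) = (1::nat)"
proof -
  have sp: "s \<in> N" "s \<notin> Z1" "s \<notin> Z2" "t \<in> N" "t \<notin> Z1" "t \<notin> Z2" "t' \<in> N" "t' \<notin> Z1" "t' \<notin> Z2"
    using R3_props st(1) by blast+
  have Nd: "N = Z1 \<union> Z2 \<union> {s, t, t'}" using N_decomp st(1) by simp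
  have sx: "s \<in> {x, y, z}" using st(1) by blast
  have sV: "s \<in> V" using sp NV by auto
  have KK': "K \<noteq> K'" using K K' by auto
  have Z1s: "Z1 - {s} = Z1" using sp by auto
  have "4 = card (Z1 - {s})" using Z1s Zprops by simp
  also have "\<dots> = (\<Sum>B\<in>Dx s. card ((B - {s}) \<inter> Z1))" using local_count[OF sV] Zprops NV by blast
  also have "\<dots> = (\<Sum>B\<in>Tx s. card ((B - {s}) \<inter> Z1)) + (\<Sum>B\<in>Qx s. card ((B - {s}) \<inter> Z1))"
    by (rule sum_split)
  also have "(\<Sum>B\<in>Tx s. card ((B - {s}) \<inter> Z1)) = 0"
  proof -
    have "card ((B - {s}) \<inter> Z1) = 0" if "B \<in> Tx s" for B
    proof -
      have "B \<inter> N = {s}" using N_tri_N sp that unfolding Tx_def by auto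
      hence "(B - {s}) \<inter> Z1 = {}" using Zprops by auto
      thus ?thesis by simp
    qed
    thus ?thesis by simp
  qed
  also have "(\<Sum>B\<in>Qx s. card ((B - {s}) \<inter> Z1)) = card ((K - {s}) \<inter> Z1) + card ((K' - {s}) \<inter> Z1)
      + (\<Sum>B\<in>Qx s - {K, K'}. card ((B - {s}) \<inter> Z1))"
  proof -
    have "K \<in> Qx s" "K' \<in> Qx s" using K K' unfolding Qx_def by auto
    thus ?thesis using KK' finQx by (simp add: sum.remove sum_diff1 insert_Diff_if Diff_insert2[symmetric] sum.remove[of "Qx s - {K}" K'])
  qed
  also have "card ((K - {s}) \<inter> Z1) = (if p \<in> Z1 then 1 else 0)"
  proof -
    have c3: "card (K \<inter> N) = 3" using R3_wt(2)[OF sx K(1) K(2)] .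
    have "{s, t, p} \<subseteq> K \<inter> N" using K p sp Zprops by auto
    moreover have "card {s, t, p} = 3" using st p sp by auto
    moreover have "finite (K \<inter> N)" using finB QD K by auto
    ultimately have "{s, t, p} = K \<inter> N" using c3 card_subset_eq[of "K \<inter> N" "{s, t, p}"] by simp
    hence "K \<inter> N = {s, t, p}" by simp
    hence "(K - {s}) \<inter> Z1 = (if p \<in> Z1 then {p} else {})" using Zprops sp by auto
    thus ?thesis by simp
  qed
  also have "card ((K' - {s}) \<inter> Z1) = (if q \<in> Z1 then 1 else 0)"
  proof -
    have c3: "card (K' \<inter> N) = 3" using R3_wt(2)[OF sx K'(1) K'(2)] .
    have "{s, t', q} \<subseteq> K' \<inter> N" using K' q sp Zprops by auto
    moreover have "card {s, t', q} = 3" using st q sp by auto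
    moreover have "finite (K' \<inter> N)" using finB QD K' by auto
    ultimately have "{s, t', q} = K' \<inter> N" using c3 card_subset_eq[of "K' \<inter> N" "{s, t', q}"] by simp
    hence "K' \<inter> N = {s, t', q}" by simp
    hence "(K' - {s}) \<inter> Z1 = (if q \<in> Z1 then {q} else {})" using Zprops sp by auto
    thus ?thesis by simp
  qed
  also have "(\<Sum>B\<in>Qx s - {K, K'}. card ((B - {s}) \<inter> Z1)) = (\<Sum>B\<in>Qx s - {K, K'}. 1)"
  proof (rule sum.cong[OF refl])
    fix L assume L: "L \<in> Qx s - {K, K'}"
    hence LQ: "L \<in> Q" "s \<in> L" "L \<noteq> K" "L \<noteq> K'" unfolding Qx_def by auto
    have "t \<notin> L" using uniq[of L K s t] LQ K QD st by auto
    moreover have "t' \<notin> L" using uniq[of L K' s t'] LQ K' QD st by auto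
    ultimately have e: "(L \<inter> N) - {s} = (L \<inter> Z1) \<union> (L \<inter> Z2)" using Nd sp by auto
    have "card (L \<inter> N) = 3" using R3_wt(2)[OF sx LQ(1) LQ(2)] .
    moreover have "s \<in> L \<inter> N" using LQ sp by auto
    ultimately have "card ((L \<inter> N) - {s}) = 2" using finB QD LQ by simp
    moreover have "finite (L \<inter> Z1)" "finite (L \<inter> Z2)" using finB QD LQ by auto
    moreover have "(L \<inter> Z1) \<inter> (L \<inter> Z2) = {}" using F2 by auto
    ultimately have "card (L \<inter> Z1) + card (L \<inter> Z2) = 2" using e card_Un_disjoint[of "L \<inter> Z1" "L \<inter> Z2"] by simp
    moreover have "L \<noteq> Z1" "L \<noteq> Z2" using LQ sp by auto
    ultimately have "card (L \<inter> Z1) = 1" using ZiK LQ by fastforce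
    moreover have "(L - {s}) \<inter> Z1 = L \<inter> Z1" using sp by auto
    ultimately show "card ((L - {s}) \<inter> Z1) = 1" by simp
  qed
  also have "(\<Sum>B\<in>Qx s - {K, K'}. (1::nat)) = 3"
  proof -
    have "K \<in> Qx s" "K' \<in> Qx s" using K K' unfolding Qx_def by auto
    hence "card (Qx s - {K, K'}) = card (Qx s) - 2" using KK' finQx by (simp add: card_Diff_subset)
    thus ?thesis using N_tri(2) sp by simp
  qed
  finally show ?thesis by simp
qed

lemma optII: assumes no: "\<not> (\<exists>K\<in>Q. x \<in> K \<and> y \<in> K \<and> z \<in> K)" shows False
proof -
  have get: "\<exists>K p. K \<in> Q \<and> s \<in> K \<and> t \<in> K \<and> t' \<notin> K \<and> p \<in> K \<and> p \<in> Z1 \<union> Z2"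
    if st: "{s, t, t'} = {x, y, z}" "s \<noteq> t" "s \<noteq> t'" "t \<noteq> t'" for s t t'
  proof -
    have sp: "s \<in> N" "t \<in> N" "t' \<in> N" using R3_props st(1) by blast+
    obtain K where K: "K \<in> Q" "s \<in> K" "t \<in> K" using pairQ sp st by blast
    have t'K: "t' \<notin> K"
    proof
      assume "t' \<in> K"
      hence "{s, t, t'} \<subseteq> K" using K by simp
      hence "{x, y, z} \<subseteq> K" using st(1) by simp
      hence "x \<in> K \<and> y \<in> K \<and> z \<in> K" by simp
      thus False using no K by blast
    qed
    have "s \<in> {x, y, z}" using st(1) by blast
    hence "card (K \<inter> N) = 3" using R3_wt(2) K by blast
    moreover have "K \<inter> N \<subseteq> Z1 \<union> Z2 \<union> {s, t}" using N_decomp st(1) t'K by auto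
    ultimately have "\<not> (K \<inter> N \<subseteq> {s, t})"
    proof -
      assume c: "card (K \<inter> N) = 3"
      show ?thesis
      proof
        assume "K \<inter> N \<subseteq> {s, t}"
        hence "card (K \<inter> N) \<le> card {s, t}" by (rule card_mono[rotated]) simp
        moreover have "card {s, t} \<le> 2" by (simp add: card_insert_if)
        ultimately show False using c by simp
      qed
    qed
    then obtain p where "p \<in> K \<inter> N" "p \<notin> {s, t}" by blast
    hence "p \<in> Z1 \<union> Z2" using N_decomp st(1) t'K by auto
    thus ?thesis using K t'K \<open>p \<in> K \<inter> N\<close> by blast
  qed
  obtain K1 p where 1: "K1 \<in> Q" "x \<in> K1" "y \<in> K1" "z \<notin> K1" "p \<in> K1" "p \<in> Z1 \<union> Z2"
    using get[of x y z] xy yz xz by blast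
  obtain K2 q where 2: "K2 \<in> Q" "x \<in> K2" "z \<in> K2" "y \<notin> K2" "q \<in> K2" "q \<in> Z1 \<union> Z2"
    using get[of x z y] xy yz xz by blast
  obtain K3 r where 3: "K3 \<in> Q" "y \<in> K3" "z \<in> K3" "x \<notin> K3" "r \<in> K3" "r \<in> Z1 \<union> Z2"
    using get[of y z x] xy yz xz by blast
  have a: "(if p \<in> Z1 then 1 else 0) + (if q \<in> Z1 then 1 else 0) = (1::nat)"
    using LemII[of x y z K1 p K2 q] 1 2 xy yz xz by auto
  have b: "(if p \<in> Z1 then 1 else 0) + (if r \<in> Z1 then 1 else 0) = (1::nat)"
    using LemII[of y x z K1 p K3 r] 1 3 xy yz xz by (auto simp: insert_commute)
  have c: "(if q \<in> Z1 then 1 else 0) + (if r \<in> Z1 then 1 else 0) = (1::nat)"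
    using LemII[of z x y K2 q K3 r] 2 3 xy yz xz by (auto simp: insert_commute)
  show False using a b c by (auto split: if_splits)
qed

lemma optI: assumes K0: "K0 \<in> Q" "x \<in> K0" "y \<in> K0" "z \<in> K0" shows False
proof -
  have sN: "x \<in> N" "y \<in> N" "z \<in> N" "x \<notin> Z1 \<union> Z2" "y \<notin> Z1 \<union> Z2" "z \<notin> Z1 \<union> Z2"
    using R3_props[of x] R3_props[of y] R3_props[of z] by auto
  have xx: "x \<in> {x, y, z}" by simp
  have K0w: "wt K0 = 1" "card (K0 \<inter> N) = 3" using R3_wt[OF xx K0(1) K0(2)] by auto
  have finK0N: "finite (K0 \<inter> N)" using finB QD K0 by auto
  have s3: "{x, y, z} \<subseteq> K0 \<inter> N" and c3: "card {x, y, z} = 3" using K0 sN xy yz xz by auto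
  have "{x, y, z} = K0 \<inter> N" using card_subset_eq[OF finK0N s3] c3 K0w by simp
  hence K0N: "K0 \<inter> N = {x, y, z}" by simp
  obtain w0 where w0: "K0 \<inter> W = {w0}" using K0w(1) unfolding wt_def by (metis card_1_singletonE)
  have w0W: "w0 \<in> W" "w0 \<in> K0" "w0 \<notin> N" "w0 \<in> V" using w0 WV unfolding N_def by auto
  have K0Qx: "K0 \<in> Qx w0" using K0 w0W unfolding Qx_def by auto
  have other: "card (K \<inter> N) \<le> 2 \<and> K \<inter> N \<subseteq> Z1 \<union> Z2" if K: "K \<in> Qx w0 - {K0}" for K
  proof -
    have KQ: "K \<in> Q" "w0 \<in> K" "K \<noteq> K0" using K unfolding Qx_def by auto
    have "s \<notin> K" if "s \<in> {x, y, z}" for s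
    proof
      assume "s \<in> K"
      moreover have "s \<in> K0" "s \<noteq> w0" using that K0 w0W sN by auto
      ultimately show False using uniq[of K K0 w0 s] KQ K0 QD w0W by auto
    qed
    hence sub: "K \<inter> N \<subseteq> Z1 \<union> Z2" using N_decomp by auto
    hence e: "K \<inter> N = (K \<inter> Z1) \<union> (K \<inter> Z2)" using Zprops by auto
    have "card (K \<inter> N) \<le> card (K \<inter> Z1) + card (K \<inter> Z2)" unfolding e by (rule card_Un_le)
    moreover have "card (K \<inter> Z1) \<le> 1" "card (K \<inter> Z2) \<le> 1" using ZiK KW_ne KQ w0W by auto
    ultimately show ?thesis using sub by simp
  qed
  have "card (Qx w0 - {K0}) = 2" using W_tri(2)[OF w0W(1)] K0Qx finQx by simp
  then obtain K' K'' where KK: "Qx w0 - {K0} = {K', K''}" "K' \<noteq> K''" by (meson card_2_iff)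
  have Qxw0: "Qx w0 = {K0, K', K''}" using KK K0Qx by auto
  have "(\<Sum>K\<in>Qx w0. card (K \<inter> N)) = card (K0 \<inter> N) + (\<Sum>K\<in>Qx w0 - {K0}. card (K \<inter> N))"
    using K0Qx finQx by (simp add: sum.remove)
  also have "(\<Sum>K\<in>Qx w0 - {K0}. card (K \<inter> N)) = card (K' \<inter> N) + card (K'' \<inter> N)"
    using KK by simp
  finally have "card (K' \<inter> N) + card (K'' \<inter> N) \<ge> 4" using Wcount[OF w0W(1)] K0w by simp
  moreover have "card (K' \<inter> N) \<le> 2" "card (K'' \<inter> N) \<le> 2" using other KK by auto
  ultimately have cK: "card (K' \<inter> N) = 2" "card (K'' \<inter> N) = 2" by auto
  have K'Q: "K' \<in> Q" "w0 \<in> K'" "K'' \<in> Q" "w0 \<in> K''" using KK unfolding Qx_def by blast+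
  have wtK: "wt K' = 2" "wt K'' = 2" using cK Q_WN K'Q by fastforce+
  have subK: "K' \<inter> N \<subseteq> Z1 \<union> Z2" "K'' \<inter> N \<subseteq> Z1 \<union> Z2" using other KK by auto
  obtain w1 where w1: "w1 \<noteq> w0" "K' \<inter> W = {w0, w1}" using card2_pick[of "K' \<inter> W" w0] wtK K'Q w0W unfolding wt_def by auto
  obtain w2 where w2: "w2 \<noteq> w0" "K'' \<inter> W = {w0, w2}" using card2_pick[of "K'' \<inter> W" w0] wtK K'Q w0W unfolding wt_def by auto
  have w12: "w1 \<noteq> w2"
  proof
    assume "w1 = w2"
    hence "w1 \<in> K'" "w1 \<in> K''" using w1 w2 by auto
    hence "K' = K''" using uniq[of K' K'' w0 w1] K'Q QD w1 by auto
    thus False using KK by simp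
  qed
  obtain a1 b1 where ab1: "K' \<inter> N = {a1, b1}" "a1 \<in> Z1" "b1 \<in> Z2" using P2s K'Q wtK by blast
  obtain a2 b2 where ab2: "K'' \<inter> N = {a2, b2}" "a2 \<in> Z1" "b2 \<in> Z2" using P2s K'Q wtK by blast
  have a12: "a1 \<noteq> a2"
  proof
    assume "a1 = a2"
    hence "K' = K''" using F3(2)[of a1 K' K''] ab1 ab2 K'Q wtK by auto
    thus False using KK by simp
  qed
  have b12: "b1 \<noteq> b2"
  proof
    assume "b1 = b2"
    hence "K' = K''" using F3(2)[of b1 K' K''] ab1 ab2 K'Q wtK by auto
    thus False using KK by simp
  qed
  have ZZ: "Z1 \<inter> Z2 = {}" by (rule F2)
  have "card (Z1 - {a1, a2}) = 2" using Zprops ab1 ab2 a12 finB by (simp add: card_Diff_subset)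
  then obtain a3 a4 where a34: "Z1 - {a1, a2} = {a3, a4}" "a3 \<noteq> a4" by (meson card_2_iff)
  have "card (Z2 - {b1, b2}) = 2" using Zprops ab1 ab2 b12 finB by (simp add: card_Diff_subset)
  then obtain c d where cd: "Z2 - {b1, b2} = {c, d}" "c \<noteq> d" by (meson card_2_iff)
  have a3Z: "a3 \<in> Z1" "a3 \<noteq> a1" "a3 \<noteq> a2" "a4 \<in> Z1" "a4 \<noteq> a1" "a4 \<noteq> a2" using a34 by blast+
  have P2blk: "\<exists>b. K \<inter> N = {a, b} \<and> b \<in> Z2 \<and> b \<noteq> b1 \<and> b \<noteq> b2"
    if a: "a \<in> Z1" "a \<noteq> a1" "a \<noteq> a2" and K: "K \<in> Q" "a \<in> K" "wt K = 2" for a K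
  proof -
    obtain a' b' where ab': "K \<inter> N = {a', b'}" "a' \<in> Z1" "b' \<in> Z2" using P2s K by blast
    have aN: "a \<in> N" using a Zprops by auto
    have "a = a'" using ab' a K ZZ aN by auto
    moreover have "b' \<noteq> b1"
    proof
      assume "b' = b1"
      hence "K = K'" using F3(2)[of b1 K K'] ab' ab1 K K'Q wtK by auto
      thus False using ab1 ab' a \<open>a = a'\<close> ZZ by auto
    qed
    moreover have "b' \<noteq> b2"
    proof
      assume "b' = b2"
      hence "K = K''" using F3(2)[of b2 K K''] ab' ab2 K K'Q wtK by auto
      thus False using ab2 ab' a \<open>a = a'\<close> ZZ by auto
    qed
    ultimately show ?thesis using ab' by blast
  qed
  obtain K3 where K3: "K3 \<in> Q" "a3 \<in> K3" "wt K3 = 2" using F3(1)[of a3] a3Z by blast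
  obtain b3 where b3: "K3 \<inter> N = {a3, b3}" "b3 \<in> Z2" "b3 \<noteq> b1" "b3 \<noteq> b2" using P2blk[OF a3Z(1-3) K3] by blast
  have "b3 \<in> {c, d}" using cd b3 by blast
  then obtain b4 where b34: "Z2 - {b1, b2} = {b3, b4}" "b3 \<noteq> b4" using cd by (metis insertE insert_commute singletonD)
  obtain K4 where K4: "K4 \<in> Q" "a4 \<in> K4" "wt K4 = 2" using F3(1)[of a4] a3Z by blast
  obtain b' where b': "K4 \<inter> N = {a4, b'}" "b' \<in> Z2" "b' \<noteq> b1" "b' \<noteq> b2" using P2blk[OF a3Z(4-6) K4] by blast
  have "b' \<noteq> b3"
  proof
    assume "b' = b3"
    hence "K4 = K3" using F3(2)[of b3 K4 K3] b' b3 K3 K4 ZZ by auto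
    thus False using K3 K4 b3 b' a34 a3Z ZZ by auto
  qed
  hence K4N: "K4 \<inter> N = {a4, b4}" using b' b34 by blast
  have b4Z: "b4 \<in> Z2" "b4 \<noteq> b3" using b34 by blast+
  have R4N: "u \<in> N" "u \<notin> K0" "u \<notin> K'" "u \<notin> K''" if "u \<in> {a3, a4, b3, b4}" for u
  proof -
    have uZ: "u \<in> (Z1 - {a1, a2}) \<union> (Z2 - {b1, b2})" using that a34 b34 by blast
    thus "u \<in> N" using Zprops by auto
    show "u \<notin> K0"
    proof
      assume "u \<in> K0"
      hence "u \<in> {x, y, z}" using K0N \<open>u \<in> N\<close> by blast
      hence "u \<notin> Z1 \<union> Z2" using sN by blast
      thus False using uZ by blast
    qed
    show "u \<notin> K'" using uZ ab1 ZZ \<open>u \<in> N\<close> by auto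
    show "u \<notin> K''" using uZ ab2 ZZ \<open>u \<in> N\<close> by auto
  qed
  have triw0: "\<exists>B\<in>T. w0 \<in> B \<and> u \<in> B" if u: "u \<in> {a3, a4, b3, b4}" for u
  proof -
    have uN: "u \<in> N" "u \<noteq> w0" using R4N[OF u] w0W by auto
    obtain B where B: "B \<in> D" "w0 \<in> B" "u \<in> B" using exb[of w0 u] uN w0W NV by auto
    have "B \<notin> Q"
    proof
      assume "B \<in> Q"
      hence "B \<in> Qx w0" using B unfolding Qx_def by auto
      thus False using Qxw0 R4N[OF u] B by auto
    qed
    thus ?thesis using B TQ_D by auto
  qed
  have claim: "\<exists>L\<in>Q. w \<in> L \<and> a3 \<in> L \<and> b4 \<in> L"
    if Kw: "Kw \<in> Q" "w0 \<in> Kw" "w \<in> Kw" "w \<in> W" "w \<noteq> w0" "wt Kw = 2"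
      and nKw: "\<forall>u\<in>{a3, a4, b3, b4}. u \<notin> Kw" for w Kw
  proof -
    have wV: "w \<in> V" "w \<notin> N" using Kw WV unfolding N_def by auto
    have blk: "\<exists>L\<in>Q. w \<in> L \<and> u \<in> L \<and> L \<noteq> Kw" if u: "u \<in> {a3, a4, b3, b4}" for u
    proof -
      have uN: "u \<in> N" "u \<noteq> w" using R4N[OF u] wV by auto
      obtain B where B: "B \<in> D" "w \<in> B" "u \<in> B" using exb[of w u] uN wV NV by auto
      have "B \<notin> T"
      proof
        assume BT: "B \<in> T"
        obtain B' where B': "B' \<in> T" "w0 \<in> B'" "u \<in> B'" using triw0[OF u] by blast
        have "B = B'" using uniqT[of u B B'] uN BT B B' by auto
        hence "B = Kw" using uniq[of B Kw w0 w] B B' Kw QD by auto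
        thus False using BT Kw TQ_disj by auto
      qed
      hence "B \<in> Q" using B TQ_D by auto
      moreover have "B \<noteq> Kw" using B nKw u by auto
      ultimately show ?thesis using B by blast
    qed
    obtain La where La: "La \<in> Q" "w \<in> La" "a3 \<in> La" "La \<noteq> Kw" using blk by blast
    obtain Lb where Lb: "Lb \<in> Q" "w \<in> Lb" "a4 \<in> Lb" "Lb \<noteq> Kw" using blk by blast
    obtain L3 where L3: "L3 \<in> Q" "w \<in> L3" "b3 \<in> L3" "L3 \<noteq> Kw" using blk by blast
    obtain L4 where L4: "L4 \<in> Q" "w \<in> L4" "b4 \<in> L4" "L4 \<noteq> Kw" using blk by blast
    have ne: "La \<noteq> Z1" "La \<noteq> Z2" "Lb \<noteq> Z1" "Lb \<noteq> Z2" "L3 \<noteq> Z1" "L3 \<noteq> Z2" "L4 \<noteq> Z1" "L4 \<noteq> Z2"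
      using KW_ne La Lb L3 L4 Kw by auto
    have Lab: "La \<noteq> Lb"
    proof
      assume "La = Lb"
      hence "La = Z1" using uniq[of La Z1 a3 a4] La Lb a3Z a34 Zprops QD by auto
      thus False using ne by simp
    qed
    have L34: "L3 \<noteq> L4"
    proof
      assume "L3 = L4"
      hence "L3 = Z2" using uniq[of L3 Z2 b3 b4] L3 L4 b3 b4Z Zprops QD by auto
      thus False using ne by simp
    qed
    have "card (Qx w - {Kw}) = 2" using W_tri(2)[OF Kw(4)] Kw finQx unfolding Qx_def by simp
    moreover have "La \<in> Qx w - {Kw}" "Lb \<in> Qx w - {Kw}" using La Lb unfolding Qx_def by auto
    ultimately have QxL: "Qx w - {Kw} = {La, Lb}" using card2_eq Lab finQx by (metis finite_Diff)
    have L3in: "L3 = La \<or> L3 = Lb" and L4in: "L4 = La \<or> L4 = Lb"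
      using QxL L3 L4 unfolding Qx_def by blast+
    show ?thesis
    proof (cases "L3 = La")
      case True
      hence "La = K3" using uniq[of La K3 a3 b3] La L3 K3 b3 a3Z ZZ QD by auto
      have "L4 = Lb" using L4in L34 True by auto
      hence "Lb = K4" using uniq[of Lb K4 a4 b4] Lb L4 K4 K4N b4Z a3Z ZZ QD by auto
      have "\<forall>K\<in>Qx w. card (K \<inter> N) = 2"
      proof
        fix K assume "K \<in> Qx w"
        hence "K = Kw \<or> K = La \<or> K = Lb" using QxL by blast
        thus "card (K \<inter> N) = 2"
          using Q_WN[of Kw] Q_WN[of K3] Q_WN[of K4] Kw K3 K4 \<open>La = K3\<close> \<open>Lb = K4\<close> by auto
      qed
      hence "(\<Sum>K\<in>Qx w. card (K \<inter> N)) = 6" using W_tri(2)[OF Kw(4)] by simp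
      thus ?thesis using Wcount[OF Kw(4)] by simp
    next
      case False
      hence "L3 = Lb" using L3in by simp
      hence "L4 = La" using L4in L34 by auto
      thus ?thesis using La L4 by blast
    qed
  qed
  have nK': "\<forall>u\<in>{a3, a4, b3, b4}. u \<notin> K'" and nK'': "\<forall>u\<in>{a3, a4, b3, b4}. u \<notin> K''"
    using R4N by blast+
  obtain L1 where L1: "L1 \<in> Q" "w1 \<in> L1" "a3 \<in> L1" "b4 \<in> L1"
    using claim[of K' w1] K'Q w1 wtK nK' by blast
  obtain L2 where L2: "L2 \<in> Q" "w2 \<in> L2" "a3 \<in> L2" "b4 \<in> L2"
    using claim[of K'' w2] K'Q w2 wtK nK'' by blast
  have "a3 \<noteq> b4" using a3Z b4Z ZZ by auto
  hence "L1 = L2" using uniq[of L1 L2 a3 b4] L1 L2 QD by auto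
  hence "{w1, w2} \<subseteq> L1 \<inter> W" using L1 L2 w1 w2 by auto
  hence "card {w1, w2} \<le> wt L1" unfolding wt_def using finB QD L1 by (intro card_mono) auto
  hence "wt L1 = 2" using w12 wt_le2[OF L1(1)] by simp
  hence "L1 = K3" using F3(2)[of a3 L1 K3] L1 K3 a3Z by auto
  hence "b4 \<in> K3 \<inter> N" using L1 R4N[of b4] by auto
  thus False using b3 b4Z a3Z ZZ by auto
qed

end

theorem mainTheorem17:
  fixes V :: "'a set" and D :: "'a set set"
  assumes "finite V" and "card V = 18"
    and "K34_decomposition V D"
    and "alpha D = 13"
  shows "(tcount V D 0, tcount V D 1, tcount V D 2, tcount V D 3) \<noteq> (0, 0, 11, 2)"
proof
  assume h: "(tcount V D 0, tcount V D 1, tcount V D 2, tcount V D 3) = (0, 0, 11, 2)"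
  hence tc: "tcount V D 0 = 0" "tcount V D 1 = 0" "tcount V D 2 = 11" "tcount V D 3 = 2" by simp_all
  interpret d: dec18 V D using assms tc by unfold_locales auto
  have "d.kk 4 = 0 \<and> ((d.kk 2 = 4 \<and> d.kk 3 = 0 \<and> d.kk 0 = 2) \<or> (d.kk 2 = 1 \<and> d.kk 3 = 1 \<and> d.kk 0 = 1))"
    by (rule d.kk_cases)
  then consider (A) "d.kk 2 = 4" "d.kk 3 = 0" "d.kk 0 = 2" | (B) "d.kk 2 = 1" "d.kk 3 = 1" "d.kk 0 = 1"
    by (elim conjE disjE) auto
  then show False
  proof cases
    case B
    thus ?thesis using d.caseB_false by simp
  next
    case A
    then obtain Z1 Z2 where Zs: "{K\<in>d.Q. d.wt K = 0} = {Z1, Z2}" "Z1 \<noteq> Z2"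
      unfolding d.kk_def by (meson card_2_iff)
    interpret a: caseA V D Z1 Z2
      by (rule caseA.intro[OF d.dec18_axioms]) (unfold_locales, use A Zs in auto)
    obtain x y z where xyz: "d.N - Z1 - Z2 = {x, y, z}" "x \<noteq> y" "y \<noteq> z" "x \<noteq> z"
      using a.cardR3 by (meson card_3_iff)
    interpret b: caseA3 V D Z1 Z2 x y z
      by (rule caseA3.intro[OF a.caseA_axioms]) (unfold_locales, use xyz in auto)
    show False using b.optI b.optII by blast
  qed
qed

end
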